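(* Let $\mathbb{H}$ be the real quaternion algebra and let $p\in\mathbb{R}[x]$ be a nonconstant polynomial. Then every element of $\mathbb{H}$ can be expressed as a product $xy$ of two elements $x,y\in p[\mathbb{H},\mathbb{H}]=\{p(ab)-p(ba)\mid a,b\in\mathbb{H}\}$. *)

theory Defs
  imports Complex_Main "HOL-Computational_Algebra.Polynomial"
begin

text \<open>The real quaternion algebra H, with basis 1, i, j, k and
  i^2 = j^2 = k^2 = ijk = -1.\<close>

datatype quat = Quat (qr: real) (qi: real) (qj: real) (qk: real)

lemma quat_eqI: "qr a = qr b \<Longrightarrow> qi a = qi b \<Longrightarrow> qj a = qj b \<Longrightarrow> qk a = qk b \<Longrightarrow> a = b"
  by (cases a; cases b) auto

instantiation quat :: real_algebra_1
begin

definition "0 = Quat 0 0 0 0"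
definition "1 = Quat 1 0 0 0"
definition "a + b = Quat (qr a + qr b) (qi a + qi b) (qj a + qj b) (qk a + qk b)"
definition "a - b = Quat (qr a - qr b) (qi a - qi b) (qj a - qj b) (qk a - qk b)"
definition "- a = Quat (- qr a) (- qi a) (- qj a) (- qk a)"
definition "scaleR r a = Quat (r * qr a) (r * qi a) (r * qj a) (r * qk a)"
definition "a * b = Quat
   (qr a * qr b - qi a * qi b - qj a * qj b - qk a * qk b)
   (qr a * qi b + qi a * qr b + qj a * qk b - qk a * qj b)
   (qr a * qj b - qi a * qk b + qj a * qr b + qk a * qi b)
   (qr a * qk b + qi a * qj b - qj a * qi b + qk a * qr b)"

instance
  by standard
    (auto simp: zero_quat_def one_quat_def plus_quat_def minus_quat_def
       uminus_quat_def scaleR_quat_def times_quat_def algebra_simps intro!: quat_eqI)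

end

definition qpoly :: "real poly \<Rightarrow> quat \<Rightarrow> quat" where
  "qpoly p a = (\<Sum>i\<le>degree p. coeff p i *\<^sub>R a ^ i)"

definition poly_commutators :: "real poly \<Rightarrow> quat set" where
  "poly_commutators p = {qpoly p (a * b) - qpoly p (b * a) | a b. True}"

end

theory Submission
  imports Defs
begin

lemma qsel[simp]:
  "qr (a * b) = qr a * qr b - qi a * qi b - qj a * qj b - qk a * qk b"
  "qi (a * b) = qr a * qi b + qi a * qr b + qj a * qk b - qk a * qj b"
  "qj (a * b) = qr a * qj b - qi a * qk b + qj a * qr b + qk a * qi b"
  "qk (a * b) = qr a * qk b + qi a * qj b - qj a * qi b + qk a * qr b"
  "qr (a + b) = qr a + qr b" "qi (a + b) = qi a + qi b"
  "qj (a + b) = qj a + qj b" "qk (a + b) = qk a + qk b"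
  "qr (a - b) = qr a - qr b" "qi (a - b) = qi a - qi b"
  "qj (a - b) = qj a - qj b" "qk (a - b) = qk a - qk b"
  "qr (- a) = - qr a" "qi (- a) = - qi a" "qj (- a) = - qj a" "qk (- a) = - qk a"
  "qr (r *\<^sub>R a) = r * qr a" "qi (r *\<^sub>R a) = r * qi a"
  "qj (r *\<^sub>R a) = r * qj a" "qk (r *\<^sub>R a) = r * qk a"
  "qr 0 = 0" "qi 0 = 0" "qj 0 = 0" "qk 0 = 0"
  "qr 1 = 1" "qi 1 = 0" "qj 1 = 0" "qk 1 = 0"
  by (simp_all add: times_quat_def plus_quat_def minus_quat_def uminus_quat_def
      scaleR_quat_def zero_quat_def one_quat_def)

definition phi :: "quat \<Rightarrow> complex \<Rightarrow> quat" where
  "phi e w = Re w *\<^sub>R 1 + Im w *\<^sub>R e"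

lemma phi_add: "phi e (a + b) = phi e a + phi e b"
  by (simp add: phi_def algebra_simps scaleR_add_left)

lemma phi_mult: assumes "e * e = -1" shows "phi e (a * b) = phi e a * phi e b"
proof -
  have "phi e a * phi e b = (Re a * Re b) *\<^sub>R 1 + (Re a * Im b) *\<^sub>R e + (Im a * Re b) *\<^sub>R e
     + (Im a * Im b) *\<^sub>R (e * e)"
    by (simp add: phi_def algebra_simps)
  also have "\<dots> = phi e (a * b)" using assms
    by (simp add: phi_def algebra_simps scaleR_add_left scaleR_diff_left)
  finally show ?thesis by simp
qed

lemma phi_one: "phi e 1 = 1" by (simp add: phi_def)

lemma phi_pow: assumes "e * e = -1" shows "phi e (w ^ n) = phi e w ^ n"
  by (induction n) (simp_all add: phi_one phi_mult[OF assms])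

lemma phi_ofreal_mult: "phi e (of_real r * w) = r *\<^sub>R phi e w"
  by (simp add: phi_def algebra_simps)

lemma phi_zero: "phi e 0 = 0" by (simp add: phi_def)

lemma phi_sum: "phi e (sum f A) = (\<Sum>x\<in>A. phi e (f x))"
  by (induction A rule: infinite_finite_induct) (simp_all add: phi_add phi_zero)

lemma qpoly_phi: assumes "e * e = -1"
  shows "qpoly p (phi e w) = phi e (poly (map_poly complex_of_real p) w)"
  by (simp add: qpoly_def poly_altdef phi_sum coeff_map_poly degree_map_poly
      phi_ofreal_mult phi_pow[OF assms])

lemma comm_in:
  assumes ee: "e * e = -1" and ff: "f * f = -1" and fe: "f * e = -(e * f)"
  shows "(2 * Im (poly (map_poly complex_of_real p) w)) *\<^sub>R e \<in> poly_commutators p"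
proof -
  define P where "P = map_poly complex_of_real p"
  define a where "a = f"
  define b where "b = - (f * phi e w)"
  have ab: "a * b = phi e w"
    by (simp add: a_def b_def mult.assoc[symmetric] ff)
  have "f * phi e w * f = Re w *\<^sub>R (f * f) + Im w *\<^sub>R (f * e * f)"
    by (simp add: phi_def algebra_simps)
  also have "f * e * f = e" using fe ff ee
    by (simp add: mult.assoc)
  finally have "f * phi e w * f = - (Re w *\<^sub>R 1) + Im w *\<^sub>R e" using ff by simp
  hence ba: "b * a = phi e (cnj w)"
    by (simp add: a_def b_def phi_def)
  have real: "\<And>n. coeff P n \<in> \<real>" by (simp add: P_def coeff_map_poly)
  have "qpoly p (a * b) - qpoly p (b * a) = phi e (poly P w) - phi e (cnj (poly P w))"
    unfolding ab ba qpoly_phi[OF ee] P_def[symmetric] poly_cnj_real[OF real] ..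
  also have "\<dots> = (2 * Im (poly P w)) *\<^sub>R e"
    apply (simp add: phi_def algebra_simps) by (metis mult_2 scaleR_add_left)
  finally have eq: "qpoly p (a * b) - qpoly p (b * a) = (2 * Im (poly P w)) *\<^sub>R e" .
  show ?thesis unfolding poly_commutators_def mem_Collect_eq
    by (rule exI[of _ a], rule exI[of _ b]) (simp add: eq[unfolded P_def])
qed

lemma im_surj:
  fixes p :: "real poly" assumes dp: "degree p \<ge> 1" and t: "t > 0"
  shows "\<exists>w. Im (poly (map_poly complex_of_real p) w) = t"
proof -
  define P where "P = map_poly complex_of_real p"
  define n where "n = degree p"
  define c where "c = lead_coeff p"
  have degP: "degree P = n" by (simp add: P_def n_def degree_map_poly)
  have lcP: "lead_coeff P = of_real c" by (simp add: P_def c_def coeff_map_poly degree_map_poly)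
  have c0: "c \<noteq> 0" using dp by (auto simp: c_def)
  have n0: "n > 0" using dp by (simp add: n_def)
  define z where "z = cis (sgn c * pi / (2 * real n))"
  have "z ^ n = cis (sgn c * pi / 2)" unfolding z_def DeMoivre using n0 by simp
  also have "\<dots> = of_real (sgn c) * \<i>"
  proof (cases "c > 0")
    case True thus ?thesis by simp
  next
    case False
    hence "sgn c = -1" using c0 by simp
    thus ?thesis by (simp add: complex_eq_iff)
  qed
  finally have zn: "z ^ n = of_real (sgn c) * \<i>" .
  have nz: "norm z = 1" by (simp add: z_def)
  have lim1: "((\<lambda>x. poly P x / x ^ n) \<longlongrightarrow> of_real c) at_infinity"
    using poly_divide_tendsto_aux[of P] degP lcP by simp
  have lim2: "filterlim (\<lambda>s::real. of_real s * z) at_infinity at_top"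
    unfolding filterlim_at_infinity_conv_norm_at_top
  proof -
    have "filterlim (\<lambda>s::real. s) at_top at_top" by (rule filterlim_ident)
    moreover have "\<forall>\<^sub>F s in at_top. s = norm (complex_of_real s * z)"
      using eventually_ge_at_top[of "0::real"] by eventually_elim (simp add: norm_mult nz)
    ultimately show "filterlim (\<lambda>s::real. norm (complex_of_real s * z)) at_top at_top"
      using filterlim_cong by fastforce
  qed
  have lim3: "((\<lambda>s. poly P (of_real s * z) / (of_real s * z) ^ n) \<longlongrightarrow> of_real c) at_top"
    using filterlim_compose[OF lim1 lim2] by simp
  have lim4: "((\<lambda>s. Im (poly P (of_real s * z) / (of_real s * z) ^ n * z ^ n)) \<longlongrightarrow> Im (of_real c * z ^ n)) at_top"
    by (intro tendsto_intros lim3)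
  have "Im (of_real c * z ^ n) = \<bar>c\<bar>" unfolding zn by (simp add: abs_sgn)
  hence "\<forall>\<^sub>F s in at_top. Im (poly P (of_real s * z) / (of_real s * z) ^ n * z ^ n) > \<bar>c\<bar> / 2"
    using lim4 c0 by (intro order_tendstoD(1)) auto
  moreover have "\<forall>\<^sub>F s in at_top. s \<ge> max 1 (2 * t / \<bar>c\<bar>)" by (rule eventually_ge_at_top)
  ultimately have "\<forall>\<^sub>F s in at_top. Im (poly P (of_real s * z) / (of_real s * z) ^ n * z ^ n) > \<bar>c\<bar> / 2
     \<and> s \<ge> max 1 (2 * t / \<bar>c\<bar>)" by (rule eventually_conj)
  then obtain N where N: "\<And>s. s \<ge> N \<Longrightarrow> Im (poly P (of_real s * z) / (of_real s * z) ^ n * z ^ n) > \<bar>c\<bar> / 2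
     \<and> s \<ge> max 1 (2 * t / \<bar>c\<bar>)"
    unfolding eventually_at_top_linorder by metis
  define S where "S = N"
  have S1: "Im (poly P (of_real S * z) / (of_real S * z) ^ n * z ^ n) > \<bar>c\<bar> / 2"
    and S2: "S \<ge> max 1 (2 * t / \<bar>c\<bar>)" using N[of N] by (simp_all add: S_def)
  have zn0: "z ^ n \<noteq> 0" using nz by auto
  have "poly P (of_real S * z) / (of_real S * z) ^ n * z ^ n = poly P (of_real S * z) / of_real (S ^ n)"
    using zn0 by (simp add: power_mult_distrib)
  with S1 have S3: "Im (poly P (of_real S * z)) / S ^ n > \<bar>c\<bar> / 2" by simp
  have S1': "1 \<le> S" using S2 by simp
  have Sn: "S ^ n \<ge> S" using power_increasing[of 1 n S] S1' n0 by simp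
  have Spos: "S > 0" using S2 by simp
  hence "S ^ n > 0" by simp
  with S3 have "Im (poly P (of_real S * z)) > \<bar>c\<bar> / 2 * S ^ n" by (simp add: field_simps)
  moreover have "\<bar>c\<bar> / 2 * S ^ n \<ge> t"
  proof -
    have "2 * t / \<bar>c\<bar> \<le> S ^ n" using S2 Sn by linarith
    thus ?thesis using c0 by (simp add: field_simps)
  qed
  ultimately have ge: "Im (poly P (of_real S * z)) \<ge> t" by linarith
  have g0: "Im (poly P (of_real 0 * z)) = 0"
    by (simp add: poly_0_coeff_0 P_def coeff_map_poly)
  have "continuous_on {0..S} (\<lambda>s. Im (poly P (of_real s * z)))"
    by (intro continuous_intros)
  then obtain s where "Im (poly P (of_real s * z)) = t"
    using IVT'[of "\<lambda>s. Im (poly P (of_real s * z))" 0 t S] g0 ge t Spos by auto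
  thus ?thesis unfolding P_def by blast
qed

definition perp :: "real \<Rightarrow> real \<Rightarrow> quat" where
  "perp a b = (if a = 0 \<and> b = 0 then Quat 0 1 0 0
     else Quat 0 (- b / sqrt (a\<^sup>2 + b\<^sup>2)) (a / sqrt (a\<^sup>2 + b\<^sup>2)) 0)"

lemma perp_r: "qr (perp a b) = 0" and perp_k: "qk (perp a b) = 0"
  by (simp_all add: perp_def)

lemma perp_dot: "qi (perp a b) * a + qj (perp a b) * b = 0"
  by (simp add: perp_def field_simps)

lemma perp_norm: "(qi (perp a b))\<^sup>2 + (qj (perp a b))\<^sup>2 = 1"
proof (cases "a = 0 \<and> b = 0")
  case True thus ?thesis by (simp add: perp_def)
next
  case False
  hence pos: "a\<^sup>2 + b\<^sup>2 > 0" by (simp add: sum_power2_gt_zero_iff)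
  have "(qi (perp a b))\<^sup>2 + (qj (perp a b))\<^sup>2 = (b\<^sup>2 + a\<^sup>2) / (sqrt (a\<^sup>2 + b\<^sup>2))\<^sup>2"
    using False by (simp add: perp_def power_divide add_divide_distrib)
  also have "\<dots> = 1" using pos False by (simp add: add.commute)
  finally show ?thesis .
qed

lemma pure_sq: "qr u = 0 \<Longrightarrow> u * u = - (((qi u)\<^sup>2 + (qj u)\<^sup>2 + (qk u)\<^sup>2) *\<^sub>R 1)"
  by (intro quat_eqI) (simp_all add: power2_eq_square)

lemma pure_anticomm:
  assumes "qr x = 0" "qr y = 0" "qi x * qi y + qj x * qj y + qk x * qk y = 0"
  shows "y * x = - (x * y)"
  using assms by (intro quat_eqI) (simp_all add: algebra_simps)

lemma perp_sq: "perp a b * perp a b = -1"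
proof -
  have "perp a b * perp a b = - (((qi (perp a b))\<^sup>2 + (qj (perp a b))\<^sup>2 + (qk (perp a b))\<^sup>2) *\<^sub>R 1)"
    by (rule pure_sq) (simp add: perp_r)
  thus ?thesis by (simp add: perp_k perp_norm)
qed

lemma pure_in:
  fixes p :: "real poly" assumes dp: "degree p \<ge> 1" and u: "qr u = 0"
  shows "u \<in> poly_commutators p"
proof (cases "u = 0")
  case True
  have "u = qpoly p (0 * 0) - qpoly p (0 * 0)" using True by simp
  thus ?thesis unfolding poly_commutators_def by blast
next
  case False
  define N where "N = sqrt ((qi u)\<^sup>2 + (qj u)\<^sup>2 + (qk u)\<^sup>2)"
  have "(qi u)\<^sup>2 + (qj u)\<^sup>2 + (qk u)\<^sup>2 \<noteq> 0"
  proof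
    assume "(qi u)\<^sup>2 + (qj u)\<^sup>2 + (qk u)\<^sup>2 = 0"
    hence "qi u = 0" "qj u = 0" "qk u = 0" by (auto simp: add_nonneg_eq_0_iff)
    with u False show False by (metis qsel(21-24) quat_eqI)
  qed
  hence spos: "(qi u)\<^sup>2 + (qj u)\<^sup>2 + (qk u)\<^sup>2 > 0"
    by (metis add_nonneg_nonneg less_eq_real_def zero_le_power2)
  hence Npos: "N > 0" by (simp add: N_def)
  have N2: "N\<^sup>2 = (qi u)\<^sup>2 + (qj u)\<^sup>2 + (qk u)\<^sup>2" using spos by (simp add: N_def)
  define e where "e = (1 / N) *\<^sub>R u"
  have er: "qr e = 0" by (simp add: e_def u)
  have "e * e = - (((qi e)\<^sup>2 + (qj e)\<^sup>2 + (qk e)\<^sup>2) *\<^sub>R 1)" by (rule pure_sq[OF er])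
  also have "(qi e)\<^sup>2 + (qj e)\<^sup>2 + (qk e)\<^sup>2 = ((qi u)\<^sup>2 + (qj u)\<^sup>2 + (qk u)\<^sup>2) / N\<^sup>2"
    by (simp add: e_def power_divide add_divide_distrib)
  also have "\<dots> = 1" unfolding N2[symmetric] using Npos by simp
  finally have ee: "e * e = -1" by simp
  define f where "f = perp (qi e) (qj e)"
  have ff: "f * f = -1" by (simp add: f_def perp_sq)
  have fe: "e * f = - (f * e)"
    by (rule pure_anticomm) (simp_all add: f_def perp_r perp_k er perp_dot)
  obtain w where w: "Im (poly (map_poly complex_of_real p) w) = N / 2"
    using im_surj[OF dp, of "N / 2"] Npos by auto
  have "(2 * Im (poly (map_poly complex_of_real p) w)) *\<^sub>R e \<in> poly_commutators p"
    by (rule comm_in[OF ee ff]) (simp add: fe)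
  also have "(2 * Im (poly (map_poly complex_of_real p) w)) *\<^sub>R e = u"
    using Npos by (simp add: w e_def)
  finally show ?thesis .
qed

theorem theorem2p14:
  fixes p :: "real poly"
  assumes "degree p \<ge> 1"
  shows "\<forall>q :: quat. \<exists>x y. x \<in> poly_commutators p \<and> y \<in> poly_commutators p \<and> q = x * y"
proof
  fix q :: quat
  define x where "x = perp (qi q) (qj q)"
  define y where "y = - (x * q)"
  have xr: "qr x = 0" by (simp add: x_def perp_r)
  have yr: "qr y = 0"
    using perp_dot[of "qi q" "qj q"] by (simp add: y_def x_def perp_r perp_k algebra_simps)
  have "x * y = - ((x * x) * q)" by (simp add: y_def mult.assoc)
  also have "\<dots> = q" by (simp add: x_def perp_sq)
  finally show "\<exists>x y. x \<in> poly_commutators p \<and> y \<in> poly_commutators p \<and> q = x * y"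
    using pure_in[OF assms xr] pure_in[OF assms yr] by metis
qed

end
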